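(* Let $T=(V_T,E_T)$ be a finite tree, $r\in V_T$, and $Q\subseteq V_T$ non-empty. Root $T$ at $r$, let $V_Q$ be the set of nodes $u$ whose subtree (w.r.t. root $r$) contains a node of $Q$, let $T_Q$ be the subtree of $T$ induced by $V_Q$, let $A_Q=\{u\in V_Q:\deg_{T_Q}(u)\ge 3\}$, and let $Q'=Q\cup A_Q$. Then $T$ has one or two $Q'$-centroids.
   Context: For a tree $T$ and a set $Q\subseteq V_T$, a node $u\in Q$ is a $Q$-centroid if every connected component of $T-u$ contains at most $|Q|/2$ nodes of $Q$. *)

theory Defs
  imports Main
begin

definition walk_in :: "'a set \<Rightarrow> 'a rel \<Rightarrow> 'a list \<Rightarrow> bool" where
  "walk_in V E xs \<longleftrightarrow> xs \<noteq> [] \<and> set xs \<subseteq> V \<and>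
     (\<forall>i. Suc i < length xs \<longrightarrow> (xs ! i, xs ! Suc i) \<in> E)"

definition connected_graph :: "'a set \<Rightarrow> 'a rel \<Rightarrow> bool" where
  "connected_graph V E \<longleftrightarrow>
     (\<forall>u\<in>V. \<forall>v\<in>V. \<exists>xs. walk_in V E xs \<and> hd xs = u \<and> last xs = v)"

text \<open>A cycle: closed walk v0 ... vk = v0 with k \<ge> 3 and v0,...,v(k-1) distinct.\<close>
definition is_cycle :: "'a set \<Rightarrow> 'a rel \<Rightarrow> 'a list \<Rightarrow> bool" where
  "is_cycle V E xs \<longleftrightarrow> walk_in V E xs \<and> length xs \<ge> 4 \<and> hd xs = last xs
     \<and> distinct (tl xs)"

definition is_tree :: "'a set \<Rightarrow> 'a rel \<Rightarrow> bool" where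
  "is_tree V E \<longleftrightarrow> finite V \<and> V \<noteq> {} \<and> E \<subseteq> V \<times> V \<and> sym E \<and> irrefl E
     \<and> connected_graph V E \<and> (\<nexists>xs. is_cycle V E xs)"

definition comp_minus :: "'a set \<Rightarrow> 'a rel \<Rightarrow> 'a \<Rightarrow> 'a \<Rightarrow> 'a set" where
  "comp_minus V E u v =
     {w. \<exists>xs. walk_in (V - {u}) E xs \<and> hd xs = v \<and> last xs = w}"

definition is_centroid :: "'a set \<Rightarrow> 'a rel \<Rightarrow> 'a set \<Rightarrow> 'a \<Rightarrow> bool" where
  "is_centroid V E Q u \<longleftrightarrow> u \<in> Q \<and>
     (\<forall>v\<in>V - {u}. 2 * card (Q \<inter> comp_minus V E u v) \<le> card Q)"

text \<open>Subtree of u w.r.t. root r: nodes w such that u lies on the path from r to w,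
  i.e. every walk from r to w passes through u.\<close>
definition rooted_subtree :: "'a set \<Rightarrow> 'a rel \<Rightarrow> 'a \<Rightarrow> 'a \<Rightarrow> 'a set" where
  "rooted_subtree V E r u =
     {w\<in>V. \<forall>xs. walk_in V E xs \<and> hd xs = r \<and> last xs = w \<longrightarrow> u \<in> set xs}"

definition VQ :: "'a set \<Rightarrow> 'a rel \<Rightarrow> 'a \<Rightarrow> 'a set \<Rightarrow> 'a set" where
  "VQ V E r Q = {u\<in>V. rooted_subtree V E r u \<inter> Q \<noteq> {}}"

definition deg_induced :: "'a set \<Rightarrow> 'a rel \<Rightarrow> 'a \<Rightarrow> nat" where
  "deg_induced W E u = card {v\<in>W. (u, v) \<in> E}"

definition AQ :: "'a set \<Rightarrow> 'a rel \<Rightarrow> 'a \<Rightarrow> 'a set \<Rightarrow> 'a set" where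
  "AQ V E r Q = {u\<in>VQ V E r Q. deg_induced (VQ V E r Q) E u \<ge> 3}"

end

theory Submission
  imports Defs
begin

definition rch :: "'a set \<Rightarrow> 'a rel \<Rightarrow> 'a \<Rightarrow> 'a \<Rightarrow> bool" where
  "rch S E x y \<longleftrightarrow> (\<exists>xs. walk_in S E xs \<and> hd xs = x \<and> last xs = y)"

lemma walk_alt: "walk_in S E xs \<longleftrightarrow> xs \<noteq> [] \<and> set xs \<subseteq> S \<and> successively (\<lambda>x y. (x,y)\<in>E) xs"
  by (simp add: walk_in_def successively_conv_nth)

lemma walk_mono: "walk_in S E xs \<Longrightarrow> set xs \<subseteq> T \<Longrightarrow> walk_in T E xs"
  by (simp add: walk_alt)

lemma walk_rch: "walk_in S E xs \<Longrightarrow> rch S E (hd xs) (last xs)"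
  unfolding rch_def by blast

lemma rch_refl: "x \<in> S \<Longrightarrow> rch S E x x"
  unfolding rch_def by (intro exI[of _ "[x]"]) (simp add: walk_alt)

lemma rch_in: "rch S E x y \<Longrightarrow> x \<in> S \<and> y \<in> S"
  unfolding rch_def walk_alt by (metis hd_in_set last_in_set subsetD)

lemma rch_mono: "rch S E x y \<Longrightarrow> S \<subseteq> T \<Longrightarrow> rch T E x y"
  unfolding rch_def walk_alt by blast

lemma rch_sym: assumes "sym E" "rch S E x y" shows "rch S E y x"
proof -
  obtain xs where xs: "walk_in S E xs" "hd xs = x" "last xs = y" using assms(2) rch_def by metis
  have "successively (\<lambda>x y. (x,y)\<in>E) (rev xs)"
    using xs(1) assms(1) unfolding walk_alt successively_rev
    by (metis (no_types, lifting) successively_mono symD)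
  then have "walk_in S E (rev xs)" using xs(1) by (simp add: walk_alt)
  then show ?thesis unfolding rch_def using xs by (intro exI[of _ "rev xs"]) (simp add: hd_rev last_rev)
qed

lemma rch_trans: assumes "rch S E x y" "rch S E y z" shows "rch S E x z"
proof -
  obtain xs where xs: "walk_in S E xs" "hd xs = x" "last xs = y" using assms(1) rch_def by metis
  obtain ys where ys: "walk_in S E ys" "hd ys = y" "last ys = z" using assms(2) rch_def by metis
  obtain ys' where ys': "ys = y # ys'" using ys by (metis list.collapse walk_alt)
  show ?thesis
  proof (cases "ys' = []")
    case True then show ?thesis using xs ys ys' unfolding rch_def by auto
  next
    case False
    have "walk_in S E (xs @ ys')" using xs ys ys' False
      unfolding walk_alt by (auto simp: successively_append_iff successively_Cons)
    then show ?thesis unfolding rch_def using xs ys ys' False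
      by (intro exI[of _ "xs @ ys'"]) (auto simp: walk_alt)
  qed
qed

lemma rch_edge: "(x,y) \<in> E \<Longrightarrow> x \<in> S \<Longrightarrow> y \<in> S \<Longrightarrow> rch S E x y"
  unfolding rch_def by (intro exI[of _ "[x,y]"]) (simp add: walk_alt)

lemma rch_step: "rch S E x y \<Longrightarrow> (y,z) \<in> E \<Longrightarrow> z \<in> S \<Longrightarrow> rch S E x z"
  by (meson rch_edge rch_in rch_trans)

lemma rch_distinct:
  assumes "rch S E x y"
  shows "\<exists>xs. walk_in S E xs \<and> hd xs = x \<and> last xs = y \<and> distinct xs"
proof -
  let ?P = "\<lambda>xs. walk_in S E xs \<and> hd xs = x \<and> last xs = y"
  obtain xs0 where "?P xs0" using assms rch_def by metis
  then obtain xs where xs: "?P xs" and min: "\<And>ys. ?P ys \<Longrightarrow> length xs \<le> length ys"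
    using ex_has_least_nat[of ?P xs0 length] by blast
  have "distinct xs"
  proof (rule ccontr)
    assume "\<not> distinct xs"
    then obtain as bs cs c where d: "xs = as @ [c] @ bs @ [c] @ cs" using not_distinct_decomp by blast
    have "?P (as @ [c] @ cs)" using xs unfolding d walk_alt
      by (auto simp: successively_append_iff successively_Cons hd_append split: if_splits)
    then show False using min[of "as @ [c] @ cs"] d by simp
  qed
  then show ?thesis using xs by blast
qed

lemma first_step:
  assumes "rch S E x y" "x \<noteq> y"
  shows "\<exists>b. (x,b) \<in> E \<and> rch (S - {x}) E b y"
proof -
  obtain xs where xs: "walk_in S E xs" "hd xs = x" "last xs = y" "distinct xs"
    using rch_distinct[OF assms(1)] by blast
  obtain xs' where xs': "xs = x # xs'" using xs by (metis list.collapse walk_alt)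
  have ne: "xs' \<noteq> []" using xs xs' assms(2) by auto
  have "walk_in (S - {x}) E xs'" using xs xs' ne unfolding walk_alt
    by (auto simp: successively_Cons)
  moreover have "(x, hd xs') \<in> E" using xs xs' ne unfolding walk_alt
    by (auto simp: successively_Cons)
  ultimately show ?thesis using xs xs' ne unfolding rch_def by auto
qed


lemma ex_in_card: "1 \<le> card X \<Longrightarrow> \<exists>a. a \<in> X"
  by (metis card.empty ex_in_conv not_one_le_zero)

lemma walk_del: "walk_in S E xs \<Longrightarrow> x \<notin> set xs \<Longrightarrow> walk_in (S - {x}) E xs"
  unfolding walk_alt by auto

lemma walk_prefix: "walk_in S E (ys @ zs) \<Longrightarrow> ys \<noteq> [] \<Longrightarrow> walk_in S E ys"
  unfolding walk_alt by (auto simp: successively_append_iff)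

lemma walk_suffix: "walk_in S E (ys @ zs) \<Longrightarrow> zs \<noteq> [] \<Longrightarrow> walk_in S E zs"
  unfolding walk_alt by (auto simp: successively_append_iff)

locale tree =
  fixes V :: "'a set" and E :: "'a rel"
  assumes T: "is_tree V E"
begin

lemma finV: "finite V" using T unfolding is_tree_def by simp
lemma symE: "sym E" using T unfolding is_tree_def by simp
lemma EV: "(x,y) \<in> E \<Longrightarrow> x \<in> V \<and> y \<in> V"
proof -
  assume "(x,y) \<in> E"
  moreover have "E \<subseteq> V \<times> V" using T unfolding is_tree_def by simp
  ultimately show ?thesis by auto
qed
lemma conn: "x \<in> V \<Longrightarrow> y \<in> V \<Longrightarrow> rch V E x y"
proof -
  assume "x \<in> V" "y \<in> V"
  moreover have "connected_graph V E" using T unfolding is_tree_def by simp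
  ultimately show ?thesis unfolding connected_graph_def rch_def by simp
qed
lemma nocyc: "\<not> is_cycle V E xs" using T unfolding is_tree_def by simp

lemma Cdef: "comp_minus V E u v = {w. rch (V-{u}) E v w}"
  by (simp add: comp_minus_def rch_def)

lemma C_sub: "comp_minus V E u v \<subseteq> V - {u}"
  unfolding Cdef using rch_in by fast

lemma C_self: "v \<in> V - {u} \<Longrightarrow> v \<in> comp_minus V E u v"
  unfolding Cdef by (simp add: rch_refl)

lemma C_eq: assumes "w \<in> comp_minus V E u v" shows "comp_minus V E u w = comp_minus V E u v"
proof -
  have 1: "rch (V-{u}) E v w" using assms Cdef by simp
  have 2: "rch (V-{u}) E w v" using rch_sym[OF symE 1] .
  show ?thesis unfolding Cdef using rch_trans[OF 1] rch_trans[OF 2] by auto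
qed

lemma C_disj: assumes "w \<notin> comp_minus V E u v" shows "comp_minus V E u w \<inter> comp_minus V E u v = {}"
proof (rule ccontr)
  assume "\<not> ?thesis"
  then obtain t where "rch (V-{u}) E w t" "rch (V-{u}) E v t" unfolding Cdef by auto
  then have "rch (V-{u}) E v w" using rch_trans rch_sym[OF symE] by metis
  then show False using assms Cdef by simp
qed
lemma NB:
  assumes "u \<in> V" "(u,a) \<in> E" "(u,b) \<in> E" "a \<noteq> b" "rch (V - {u}) E a b"
  shows False
proof -
  obtain ps where ps: "walk_in (V-{u}) E ps" "hd ps = a" "last ps = b" "distinct ps"
    using rch_distinct[OF assms(5)] by blast
  have ne: "ps \<noteq> []" using ps walk_alt by blast
  have len: "length ps \<ge> 2"
  proof (rule ccontr)
    assume "\<not> length ps \<ge> 2"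
    then obtain c where "ps = [c]" using ne
      by (metis One_nat_def Suc_1 le_less_linear length_0_conv length_Suc_conv less_Suc0 less_antisym)
    then show False using ps assms(4) by simp
  qed
  have bu: "(b,u) \<in> E" using assms(3) symE by (meson symD)
  have "walk_in V E (u # ps @ [u])"
    using ps ne assms(1,2) bu unfolding walk_alt
    by (auto simp: successively_append_iff successively_Cons)
  moreover have "u \<notin> set ps" using ps(1) unfolding walk_alt by blast
  then have "distinct (tl (u # ps @ [u]))" using ps(4) by simp
  ultimately have "is_cycle V E (u # ps @ [u])" using len unfolding is_cycle_def by auto
  then show False using nocyc by blast
qed

lemma C_union:
  assumes "u \<in> V" "v \<in> V" "u \<noteq> v" "w \<in> V"
  shows "w \<in> comp_minus V E u v \<or> w \<in> comp_minus V E v u"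
proof (cases "w = u \<or> w = v")
  case True then show ?thesis using assms C_self[of u v] C_self[of v u] by auto
next
  case False
  obtain xs where xs: "walk_in V E xs" "hd xs = w" "last xs = u" "distinct xs"
    using rch_distinct[OF conn[OF assms(4,1)]] by blast
  show ?thesis
  proof (cases "v \<in> set xs")
    case False
    then have "walk_in (V - {v}) E xs" using xs walk_del by metis
    then have "rch (V - {v}) E w u" using xs walk_rch by metis
    then show ?thesis using rch_sym[OF symE] by (simp add: Cdef)
  next
    case True
    obtain ys zs where d: "xs = ys @ v # zs" using split_list[OF True] by blast
    have zs: "zs \<noteq> []"
    proof
      assume "zs = []" then have "last xs = v" using d by simp
      then show False using xs(3) assms(3) by simp
    qed
    have "last xs = last zs" using d zs by simp
    then have "u \<in> set zs" using xs(3) zs last_in_set by metis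
    then have "u \<notin> set (ys @ [v])" using xs(4) d assms(3) by auto
    moreover have "walk_in V E (ys @ [v])" using walk_prefix[of V E "ys @ [v]" zs] xs d by simp
    ultimately have "walk_in (V - {u}) E (ys @ [v])" using walk_del by metis
    then have "rch (V - {u}) E w v" using walk_rch[of "V - {u}" E "ys @ [v]"] xs d
      by (simp add: hd_append split: if_splits)
    then show ?thesis using rch_sym[OF symE] by (simp add: Cdef)
  qed
qed

lemma ES:
  assumes "(x,y) \<in> E"
  shows "comp_minus V E x y \<inter> comp_minus V E y x = {}"
proof (rule ccontr)
  assume "\<not> ?thesis"
  then obtain w where "w \<in> comp_minus V E x y" "w \<in> comp_minus V E y x" by blast
  then have w1: "rch (V - {x}) E y w" and w2: "rch (V - {y}) E x w" by (simp_all add: Cdef)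
  have "w \<in> V - {x}" using rch_in[OF w1] by simp
  then have "x \<noteq> w" by blast
  then obtain b where b: "(x,b) \<in> E" "rch (V - {y} - {x}) E b w"
    using first_step[OF w2] by blast
  have "b \<in> V - {y} - {x}" using rch_in[OF b(2)] by simp
  then have nby: "b \<noteq> y" by simp
  have "V - {y} - {x} \<subseteq> V - {x}" by blast
  then have "rch (V - {x}) E b w" using rch_mono[OF b(2)] by simp
  then have "rch (V - {x}) E y b" using rch_trans[OF w1 rch_sym[OF symE]] by simp
  moreover have "x \<in> V" using EV[OF assms] by simp
  ultimately show False using NB[of x y b] assms b(1) nby by simp
qed
lemma SEP:
  assumes "walk_in V E ps" "hd ps = x" "last ps = y" "distinct ps" "z \<in> set ps"
    and "walk_in V E xs" "hd xs = x" "last xs = y"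
  shows "z \<in> set xs"
proof (rule ccontr)
  assume nz: "z \<notin> set xs"
  have xsne: "xs \<noteq> []" using assms(6) walk_alt by blast
  have "x \<in> set xs" "y \<in> set xs" using xsne assms(7,8) hd_in_set last_in_set by metis+
  then have zx: "z \<noteq> x" and zy: "z \<noteq> y" using nz by auto
  obtain ys zs where d: "ps = ys @ z # zs" using split_list[OF assms(5)] by blast
  have ys: "ys \<noteq> []"
  proof
    assume "ys = []" then have "hd ps = z" using d by simp
    then show False using assms(2) zx by simp
  qed
  have zs: "zs \<noteq> []"
  proof
    assume "zs = []" then have "last ps = z" using d by simp
    then show False using assms(3) zy by simp
  qed
  have w1: "walk_in V E ys" using walk_prefix[of V E ys "z # zs"] assms(1) d ys by simp
  have w2: "walk_in V E zs" using walk_suffix[of V E "ys @ [z]" zs] assms(1) d zs by simp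
  have nzy: "z \<notin> set ys" and nzz: "z \<notin> set zs" using assms(4) d by auto
  have hx: "hd ys = x" using assms(2) d ys by simp
  have ly: "last zs = y" using assms(3) d zs by simp
  have r1: "rch (V - {z}) E x (last ys)" using walk_rch[OF walk_del[OF w1 nzy]] hx by simp
  have r2: "rch (V - {z}) E (hd zs) y" using walk_rch[OF walk_del[OF w2 nzz]] ly by simp
  have r3: "rch (V - {z}) E x y" using walk_rch[OF walk_del[OF assms(6) nz]] assms(7,8) by simp
  have "rch (V - {z}) E (last ys) x" using rch_sym[OF symE r1] .
  then have "rch (V - {z}) E (last ys) y" using rch_trans r3 by metis
  then have r: "rch (V - {z}) E (last ys) (hd zs)" using rch_trans rch_sym[OF symE r2] by metis
  have sc: "successively (\<lambda>x y. (x, y) \<in> E) (ys @ z # zs)" using assms(1) d unfolding walk_alt by simp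
  then have e1: "(last ys, z) \<in> E" using ys by (simp add: successively_append_iff)
  have e2: "(z, hd zs) \<in> E" using sc zs
    by (cases zs) (simp_all add: successively_append_iff successively_Cons)
  have e1': "(z, last ys) \<in> E" using e1 symE by (meson symD)
  have "last ys \<in> set ys" "hd zs \<in> set zs" using ys zs by simp_all
  then have ne: "last ys \<noteq> hd zs" using assms(4) d by auto
  have "z \<in> V" using EV[OF e2] by simp
  then show False using NB[of z "last ys" "hd zs"] e1' e2 ne r by simp
qed
end

locale mt = tree +
  fixes r :: 'a and Q :: "'a set"
  assumes rV: "r \<in> V" and QV: "Q \<subseteq> V" and Qne: "Q \<noteq> {}"
begin

abbreviation "W \<equiv> VQ V E r Q"
abbreviation "Q' \<equiv> Q \<union> AQ V E r Q"

lemma W_sub: "W \<subseteq> V" unfolding VQ_def by blast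

lemma Q_W: "Q \<subseteq> W"
proof
  fix q assume q: "q \<in> Q"
  have "q \<in> rooted_subtree V E r q" using q QV unfolding rooted_subtree_def
    by (auto simp: walk_alt)
  then show "q \<in> W" using q QV unfolding VQ_def by blast
qed

lemma Q'_W: "Q' \<subseteq> W" using Q_W unfolding AQ_def by blast

lemma Q'_V: "Q' \<subseteq> V" using Q'_W W_sub by blast

lemma finQ': "finite Q'" using Q'_V finV finite_subset by blast

lemma W_r: assumes "u \<in> W" shows "rch W E r u"
proof -
  have uV: "u \<in> V" using assms W_sub by blast
  obtain q where q: "q \<in> Q" "q \<in> rooted_subtree V E r u" using assms unfolding VQ_def by blast
  have qV: "q \<in> V" using q QV by blast
  obtain ps where ps: "walk_in V E ps" "hd ps = r" "last ps = q" "distinct ps"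
    using rch_distinct[OF conn[OF rV qV]] by blast
  have "u \<in> set ps" using q(2) ps unfolding rooted_subtree_def by blast
  then obtain ys zs where d: "ps = ys @ u # zs" using split_list by metis
  have wp: "walk_in V E (ys @ [u])" using walk_prefix[of V E "ys @ [u]" zs] ps(1) d by simp
  have "set (ys @ [u]) \<subseteq> W"
  proof
    fix z assume z: "z \<in> set (ys @ [u])"
    then have zp: "z \<in> set ps" using d by auto
    have zV: "z \<in> V" using zp ps(1) unfolding walk_alt by blast
    have "q \<in> rooted_subtree V E r z"
      unfolding rooted_subtree_def using qV SEP[OF ps zp] by blast
    then show "z \<in> W" using zV q(1) unfolding VQ_def by blast
  qed
  then have "walk_in W E (ys @ [u])" using walk_mono[OF wp] by blast
  moreover have "hd (ys @ [u]) = r" using ps(2) d by (cases ys) simp_all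
  ultimately show ?thesis using walk_rch by fastforce
qed

lemma W_conn: assumes "x \<in> W" "z \<in> W" shows "rch W E x z"
  using rch_trans[OF rch_sym[OF symE W_r[OF assms(1)]] W_r[OF assms(2)]] .

lemma deg3:
  assumes "x \<in> W" "y1 \<in> W" "y2 \<in> W" "y3 \<in> W" "(x,y1) \<in> E" "(x,y2) \<in> E" "(x,y3) \<in> E"
    "y1 \<noteq> y2" "y1 \<noteq> y3" "y2 \<noteq> y3"
  shows "x \<in> Q'"
proof -
  have fin: "finite {v\<in>W. (x,v) \<in> E}" using finV W_sub finite_subset by fastforce
  have "{y1,y2,y3} \<subseteq> {v\<in>W. (x,v) \<in> E}" using assms by blast
  then have "card {y1,y2,y3} \<le> card {v\<in>W. (x,v) \<in> E}" using card_mono[OF fin] by blast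
  moreover have "card {y1,y2,y3} = 3" using assms(8-10) by simp
  ultimately have "deg_induced W E x \<ge> 3" unfolding deg_induced_def by simp
  then show ?thesis using assms(1) unfolding AQ_def by blast
qed

lemma pair:
  assumes "is_centroid V E Q' u" "is_centroid V E Q' v" "u \<noteq> v"
  shows "2 * card (Q' \<inter> comp_minus V E u v) = card Q'"
    and "Q' \<inter> comp_minus V E u v \<inter> comp_minus V E v u = {}"
proof -
  have uV: "u \<in> V" and vV: "v \<in> V" using assms(1,2) Q'_V unfolding is_centroid_def by blast+
  let ?A = "Q' \<inter> comp_minus V E u v" and ?B = "Q' \<inter> comp_minus V E v u"
  have a: "2 * card ?A \<le> card Q'" using assms(1) vV assms(3) unfolding is_centroid_def by blast
  have b: "2 * card ?B \<le> card Q'" using assms(2) uV assms(3) unfolding is_centroid_def by blast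
  have "Q' \<subseteq> ?A \<union> ?B" using C_union[OF uV vV assms(3)] Q'_V by blast
  then have U: "?A \<union> ?B = Q'" by blast
  have fA: "finite ?A" and fB: "finite ?B" using finQ' by auto
  have "card (?A \<union> ?B) + card (?A \<inter> ?B) = card ?A + card ?B" using card_Un_Int[OF fA fB] by simp
  then have eq: "card Q' + card (?A \<inter> ?B) = card ?A + card ?B" using U by simp
  then have "card (?A \<inter> ?B) = 0" using a b by linarith
  then have "?A \<inter> ?B = {}" using fA by simp
  then show "Q' \<inter> comp_minus V E u v \<inter> comp_minus V E v u = {}" by blast
  show "2 * card ?A = card Q'" using eq a b by linarith
qed

lemma three:
  assumes "is_centroid V E Q' u" "is_centroid V E Q' v" "is_centroid V E Q' c"
    "u \<noteq> v" "u \<noteq> c" "v \<noteq> c" "c \<notin> comp_minus V E u v"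
  shows False
proof -
  let ?A = "Q' \<inter> comp_minus V E u v" and ?B = "Q' \<inter> comp_minus V E u c"
  have a: "2 * card ?A = card Q'" using pair(1)[OF assms(1,2,4)] .
  have b: "2 * card ?B = card Q'" using pair(1)[OF assms(1,3,5)] .
  have dj: "?A \<inter> ?B = {}" using C_disj[OF assms(7)] by blast
  have uQ: "u \<in> Q'" using assms(1) unfolding is_centroid_def by blast
  have nu: "u \<notin> ?A \<union> ?B" using C_sub[of u v] C_sub[of u c] by blast
  have fA: "finite ?A" and fB: "finite ?B" using finQ' by auto
  have "insert u (?A \<union> ?B) \<subseteq> Q'" using uQ by blast
  then have "card (insert u (?A \<union> ?B)) \<le> card Q'" using card_mono[OF finQ'] by blast
  moreover have "card (insert u (?A \<union> ?B)) = Suc (card ?A + card ?B)"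
    using nu fA fB dj by (simp add: card_Un_disjoint)
  ultimately show False using a b by linarith
qed

lemma at_most_2: "card {u\<in>V. is_centroid V E Q' u} \<le> 2"
proof (rule ccontr)
  let ?S = "{u\<in>V. is_centroid V E Q' u}"
  assume "\<not> ?thesis"
  then have c3: "card ?S \<ge> 3" by simp
  have fS: "finite ?S" using finV by simp
  obtain a where a: "a \<in> ?S" using c3 ex_in_card[of ?S] by fastforce
  have "card (?S - {a}) \<ge> 2" using c3 a fS by simp
  then obtain b where b: "b \<in> ?S - {a}" using ex_in_card[of "?S - {a}"] by fastforce
  have "card (?S - {a} - {b}) \<ge> 1" using c3 a b fS by (simp add: card_Diff_singleton)
  then obtain c where c: "c \<in> ?S - {a} - {b}" using ex_in_card[of "?S - {a} - {b}"] by fastforce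
  have ca: "is_centroid V E Q' a" and cb: "is_centroid V E Q' b" and cc: "is_centroid V E Q' c"
    using a b c by auto
  have d: "a \<noteq> b" "a \<noteq> c" "b \<noteq> c" using b c by auto
  have "a \<in> V" "b \<in> V" "c \<in> V" using a b c by auto
  then have cu: "c \<in> comp_minus V E a b \<or> c \<in> comp_minus V E b a" using C_union d by blast
  have cQ: "c \<in> Q'" using cc unfolding is_centroid_def by blast
  show False
  proof (cases "c \<in> comp_minus V E a b \<and> c \<in> comp_minus V E b a")
    case True then show False using pair(2)[OF ca cb d(1)] cQ by blast
  next
    case False
    then show False using three[OF ca cb cc d] three[OF cb ca cc d(1)[symmetric] d(3) d(2)] by blast
  qed
qed

lemma exists_centroid: "\<exists>u\<in>V. is_centroid V E Q' u"
proof (rule ccontr)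
  assume nc: "\<not> ?thesis"
  let ?n = "card Q'"
  let ?H = "\<lambda>p. fst p \<in> Q' \<and> snd p \<in> V - {fst p} \<and> ?n < 2 * card (Q' \<inter> comp_minus V E (fst p) (snd p))"
  have heavy: "\<exists>v. v \<in> V - {q} \<and> ?n < 2 * card (Q' \<inter> comp_minus V E q v)" if "q \<in> Q'" for q
  proof -
    have "q \<in> V" using that Q'_V by blast
    then have "\<not> is_centroid V E Q' q" using nc by blast
    then show ?thesis using that unfolding is_centroid_def by (auto simp: not_le)
  qed
  obtain q0 where "q0 \<in> Q" using Qne by blast
  then obtain v0 where "?H (q0, v0)" using heavy[of q0] by auto
  then obtain p where Hp: "?H p" and pmin: "\<And>p'. ?H p' \<Longrightarrow> card (comp_minus V E (fst p) (snd p)) \<le> card (comp_minus V E (fst p') (snd p'))"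
    using ex_has_least_nat[of ?H "(q0,v0)" "\<lambda>p. card (comp_minus V E (fst p) (snd p))"] by blast
  obtain q v where pqv: "p = (q,v)" by (cases p)
  have qQ: "q \<in> Q'" and vV: "v \<in> V - {q}" and hv: "?n < 2 * card (Q' \<inter> comp_minus V E q v)"
    using Hp pqv by auto
  have min: "card (comp_minus V E q v) \<le> card (comp_minus V E x b)"
    if "x \<in> Q'" "b \<in> V - {x}" "?n < 2 * card (Q' \<inter> comp_minus V E x b)" for x b
    using pmin[of "(x,b)"] that pqv by auto
  define C0 where "C0 = comp_minus V E q v"
  have qV: "q \<in> V" using qQ Q'_V by blast
  have qW: "q \<in> W" using qQ Q'_W by blast
  have finC: "finite (comp_minus V E s t)" for s t using C_sub finV finite_subset by blast
  have C0sub: "C0 \<subseteq> V - {q}" using C_sub C0_def by blast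
  have "Q' \<inter> C0 \<noteq> {}" using hv C0_def by (metis card.empty mult_0_right not_less_zero)
  then obtain z0 where z0: "z0 \<in> Q'" "z0 \<in> C0" by blast
  have "q \<noteq> v" using vV by blast
  then obtain a where qa: "(q,a) \<in> E" and av: "rch (V - {q}) E a v"
    using first_step[OF conn[OF qV]] vV by blast
  have aV: "a \<in> V - {q}" using rch_in[OF av] by blast
  have "v \<in> comp_minus V E q a" using av Cdef by simp
  then have C0a: "C0 = comp_minus V E q a" using C_eq C0_def by metis
  have aC0: "a \<in> C0" using C0a C_self[OF aV] by simp
  have aW: "a \<in> W"
  proof -
    have z0W: "z0 \<in> W" using z0 Q'_W by blast
    have "q \<noteq> z0" using z0 C0sub by blast
    then obtain b where qb: "(q,b) \<in> E" and bz: "rch (W - {q}) E b z0"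
      using first_step[OF W_conn[OF qW z0W]] by blast
    have bW: "b \<in> W - {q}" using rch_in[OF bz] by blast
    have "W - {q} \<subseteq> V - {q}" using W_sub by blast
    then have "rch (V - {q}) E b z0" using rch_mono[OF bz] by blast
    then have "z0 \<in> comp_minus V E q b" using Cdef by simp
    then have "comp_minus V E q b = comp_minus V E q a" using C_eq z0(2) C0a by metis
    moreover have "b \<in> comp_minus V E q b" using C_self[of b q] bW W_sub by blast
    ultimately have "rch (V - {q}) E a b" using Cdef by simp
    then have "a = b" using NB[of q a b] qV qa qb by blast
    then show ?thesis using bW by blast
  qed
  let ?K = "\<lambda>x. x \<in> C0 \<and> x \<in> W \<and> Q' \<inter> C0 \<inter> comp_minus V E x q = {}"
  have Ka: "?K a"
  proof -
    have "(a,q) \<in> E" using qa symE by (meson symD)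
    then have "comp_minus V E a q \<inter> comp_minus V E q a = {}" using ES by blast
    then show ?thesis using aC0 aW C0a by blast
  qed
  have bnd: "\<forall>y. ?K y \<longrightarrow> card (comp_minus V E y q) < Suc (card V)"
    using C_sub finV by (metis Diff_subset card_mono le_imp_less_Suc subset_trans)
  obtain x where Kx: "?K x" and xmax: "\<And>y. ?K y \<Longrightarrow> card (comp_minus V E y q) \<le> card (comp_minus V E x q)"
    using ex_has_greatest_nat[of ?K a "\<lambda>y. card (comp_minus V E y q)" "Suc (card V)", OF Ka bnd] by blast
  have xC0: "x \<in> C0" and xW: "x \<in> W" and xK: "Q' \<inter> C0 \<inter> comp_minus V E x q = {}" using Kx by auto
  have xV: "x \<in> V - {q}" using xC0 C0sub by blast
  have qCx: "q \<in> comp_minus V E x q" using C_self[of q x] qV xV by blast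
  have C0x: "C0 = comp_minus V E q x" using C_eq[of x q v] xC0 C0_def by simp
  have xQ: "x \<in> Q'"
  proof (rule ccontr)
    assume xnQ: "x \<notin> Q'"
    have "z0 \<notin> comp_minus V E x q" using xK z0 by blast
    have "z0 \<noteq> x" using z0 xnQ by blast
    have z0W: "z0 \<in> W" using z0 Q'_W by blast
    obtain y where xy: "(x,y) \<in> E" and yz: "rch (W - {x}) E y z0"
      using first_step[OF W_conn[OF xW z0W]] \<open>z0 \<noteq> x\<close> by metis
    have yW: "y \<in> W - {x}" using rch_in[OF yz] by blast
    have yV: "y \<in> V - {x}" using yW W_sub by blast
    have WV: "W - {x} \<subseteq> V - {x}" using W_sub by blast
    have "z0 \<in> comp_minus V E x y" using rch_mono[OF yz WV] Cdef by simp
    have ynq: "y \<notin> comp_minus V E x q"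
    proof
      assume "y \<in> comp_minus V E x q"
      then have "comp_minus V E x y = comp_minus V E x q" by (rule C_eq)
      then show False using \<open>z0 \<in> comp_minus V E x y\<close> \<open>z0 \<notin> comp_minus V E x q\<close> by simp
    qed
    have yq: "y \<noteq> q" using ynq qCx by blast
    have "rch (V - {q}) E v x" using xC0 C0_def Cdef by simp
    moreover have "y \<in> V - {q}" using yV yq by blast
    ultimately have "rch (V - {q}) E v y" using rch_step[OF _ xy] by blast
    then have yC0: "y \<in> C0" using C0_def Cdef by simp
    have xy': "x \<noteq> y" using yV by blast
    have xVV: "x \<in> V" "y \<in> V" "q \<in> V" using xV yV qV by auto
    have qy: "q \<in> comp_minus V E y x"
    proof -
      have "q \<in> comp_minus V E x y \<or> q \<in> comp_minus V E y x" using C_union[OF xVV(1) xVV(2) xy' xVV(3)] .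
      moreover have "q \<notin> comp_minus V E x y"
      proof
        assume "q \<in> comp_minus V E x y"
        then have "comp_minus V E x q = comp_minus V E x y" by (rule C_eq)
        then show False using ynq C_self[of y x] yV by blast
      qed
      ultimately show ?thesis by blast
    qed
    have Cyq: "comp_minus V E y q = comp_minus V E y x" using C_eq[OF qy] .
    have sub: "comp_minus V E x q \<subseteq> comp_minus V E y x"
    proof
      fix t assume t: "t \<in> comp_minus V E x q"
      have "t \<notin> comp_minus V E x y" using C_disj[OF ynq] t by blast
      moreover have tV: "t \<in> V" "t \<noteq> x" using t C_sub by blast+
      ultimately show "t \<in> comp_minus V E y x" using C_union[OF xVV(1) xVV(2) xy' tV(1)] tV(2) by blast
    qed
    have "x \<in> comp_minus V E y x" using C_self[of x y] xVV xy' by blast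
    moreover have "x \<notin> comp_minus V E x q" using C_sub by blast
    ultimately have "comp_minus V E x q \<subset> comp_minus V E y x" using sub by blast
    then have bigger: "card (comp_minus V E x q) < card (comp_minus V E y q)"
      using Cyq psubset_card_mono finC by metis
    have Ky: "Q' \<inter> C0 \<inter> comp_minus V E y x = {}"
    proof (rule ccontr)
      assume "\<not> ?thesis"
      then obtain p where p: "p \<in> Q'" "p \<in> C0" "p \<in> comp_minus V E y x" by blast
      have "p \<noteq> x" using p xnQ by blast
      have pnq: "p \<notin> comp_minus V E x q" using p xK by blast
      have pW: "p \<in> W" using p Q'_W by blast
      obtain y1 where xy1: "(x,y1) \<in> E" and y1p: "rch (W - {x}) E y1 p"
        using first_step[OF W_conn[OF xW pW]] \<open>p \<noteq> x\<close> by metis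
      have y1W: "y1 \<in> W" using rch_in[OF y1p] by blast
      have pC1: "p \<in> comp_minus V E x y1" using rch_mono[OF y1p WV] Cdef by simp
      have "q \<noteq> x" using xV by blast
      then obtain y2 where xy2: "(x,y2) \<in> E" and y2q: "rch (W - {x}) E y2 q"
        using first_step[OF W_conn[OF xW qW]] by metis
      have y2W: "y2 \<in> W - {x}" using rch_in[OF y2q] by blast
      have "q \<in> comp_minus V E x y2" using rch_mono[OF y2q WV] Cdef by simp
      then have C2: "comp_minus V E x q = comp_minus V E x y2" by (rule C_eq)
      have "y \<noteq> y1"
      proof
        assume "y = y1"
        then have "p \<in> comp_minus V E x y \<inter> comp_minus V E y x" using pC1 p(3) by blast
        then show False using ES[OF xy] by blast
      qed
      moreover have "y2 \<in> comp_minus V E x y2" using C_self[of y2 x] y2W W_sub by blast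
      then have "y \<noteq> y2" using ynq C2 by auto
      moreover have "y1 \<noteq> y2" using pC1 C2 pnq by auto
      moreover have "y \<in> W" "y2 \<in> W" using yW y2W by auto
      ultimately have "x \<in> Q'" using deg3[OF xW _ y1W _ xy xy1 xy2] by blast
      then show False using xnQ by blast
    qed
    have "?K y" using yC0 yW Ky Cyq by simp
    then show False using xmax[of y] bigger by simp
  qed
  obtain b where bV: "b \<in> V - {x}" and hb: "?n < 2 * card (Q' \<inter> comp_minus V E x b)"
    using heavy[OF xQ] by blast
  show False
  proof (cases "q \<in> comp_minus V E x b")
    case True
    have Cb: "comp_minus V E x b = comp_minus V E x q" using C_eq[OF True] by simp
    have "Q' \<inter> comp_minus V E x q \<subseteq> Q' - (Q' \<inter> C0)" using xK by blast
    then have "card (Q' \<inter> comp_minus V E x q) \<le> card (Q' - (Q' \<inter> C0))"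
      using card_mono[OF finite_Diff[OF finQ']] by blast
    also have "\<dots> = ?n - card (Q' \<inter> C0)"
      using card_Diff_subset[OF finite_Int[OF disjI1[OF finQ']]] by simp
    finally have "card (Q' \<inter> comp_minus V E x q) \<le> ?n - card (Q' \<inter> C0)" .
    moreover have "card (Q' \<inter> C0) \<le> ?n" using card_mono[OF finQ'] by simp
    ultimately show False using hb[unfolded Cb] hv[folded C0_def] by linarith
  next
    case False
    have sub: "comp_minus V E x b \<subseteq> C0"
    proof
      fix t assume t: "t \<in> comp_minus V E x b"
      have "t \<notin> comp_minus V E x q" using C_disj[OF False] t by blast
      moreover have tV: "t \<in> V" "t \<noteq> x" using t C_sub by blast+
      moreover have "x \<in> V" "x \<noteq> q" using xV by blast+
      ultimately have "t \<in> comp_minus V E q x" using C_union[of x q t] qV by blast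
      then show "t \<in> C0" using C0x by simp
    qed
    have "x \<notin> comp_minus V E x b" using C_sub by blast
    then have "comp_minus V E x b \<subset> C0" using sub xC0 by blast
    then have "card (comp_minus V E x b) < card C0" using psubset_card_mono[OF _ ] finC C0_def by metis
    then show False using min[OF xQ bV hb] C0_def by simp
  qed
qed


end

theorem mainTheorem6:
  fixes V :: "'a set" and E :: "'a rel" and r :: 'a and Q :: "'a set"
  assumes "is_tree V E" and "r \<in> V" and "Q \<subseteq> V" and "Q \<noteq> {}"
  shows "card {u\<in>V. is_centroid V E (Q \<union> AQ V E r Q) u} \<in> {1, 2}"
proof -
  interpret mt V E r Q using assms by (unfold_locales) auto
  let ?S = "{u\<in>V. is_centroid V E (Q \<union> AQ V E r Q) u}"
  have "finite ?S" using finV by simp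
  moreover have "?S \<noteq> {}" using exists_centroid by blast
  ultimately have "card ?S \<ge> 1" by (simp add: Suc_le_eq card_gt_0_iff)
  moreover have "card ?S \<le> 2" using at_most_2 .
  ultimately show ?thesis by auto
qed

end
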